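(* Assume $\lambda_{\max}(L_1)>\lambda_{\max}(L_2)$, that $\lambda_N^1:=\lambda_{\max}(L_1)$ is a simple eigenvalue of $L_1$ with eigenvector $v_N^1$, and that the nodal set $\{x: v_N^1(x)=0\}$ is non-empty. Let $c_1^*>0$ be the largest budget such that for $0\le c<c_1^*$ the optimal largest eigenvalue $\lambda_n^*(c)$ is simple. Then for every budget $c<c_1^*$, the optimal solution of the embedding problem $$\max_{v_i\in\mathbb{R}^n,\ \xi\in\mathbb{R}}\ c\xi+\sum_{\{i,j\}\in E_1\cup E_2}\|v_i-v_j\|^2\quad\text{s.t.}\quad \|v_i-v_j\|^2\ge\xi\ \ \forall\{i,j\}\in E_3,\ \ \sum_{i\in V}\|v_i\|^2=1$$ is one-dimensional and, up to a rotation, is given by $v_i^*=\gamma\, v_N^1(i)\,e_1$ for $i\in V_1$ and $v_i^*=0$ for $i\in V_2$, where $\gamma$ is a constant and $e_1\in\mathbb{R}^n$ is the first standard basis vector.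
   Context: A multiplex network consists of two layers $G_1=(V_1,E_1)$ and $G_2=(V_2,E_2)$, simple undirected graphs with $N$ vertices each and Laplacians $L_1,L_2$; vertices of $G_1$ are numbered $1,\dots,N$, those of $G_2$ are numbered $N+1,\dots,2N$, $n=2N$, $V=V_1\cup V_2$. Interlayer edges form the perfect matching $E_3=\{\{i,N+i\}:i=1,\dots,N\}$ with weights $w_i\ge0$; with $W=\operatorname{diag}(w)$ the multiplex Laplacian is $L(w)=\begin{bmatrix}L_1+W&-W\\-W&L_2+W\end{bmatrix}$. For $c\ge0$, $\lambda_n^*(c)=\min\{\lambda_{\max}(L(w)):w\ge0,\ \sum_i w_i=c\}$. The embedding problem above is the (Gram-representation) dual of this minimization. *)

theory Defs
  imports "HOL-Analysis.Analysis"
begin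

text \<open>Vertices of each layer form a finite type 'n with CARD('n) = N.
  The multiplex vertex set is 'n + 'n: Inl i is vertex i of G1, Inr i is vertex N+i of G2.\<close>

definition simple_graph :: "('n \<Rightarrow> 'n \<Rightarrow> bool) \<Rightarrow> bool" where
  "simple_graph E \<longleftrightarrow> (\<forall>i j. E i j \<longrightarrow> E j i) \<and> (\<forall>i. \<not> E i i)"

definition degree :: "('n::finite \<Rightarrow> 'n \<Rightarrow> bool) \<Rightarrow> 'n \<Rightarrow> nat" where
  "degree E i = card {j. E i j}"

definition laplacian :: "('n::finite \<Rightarrow> 'n \<Rightarrow> bool) \<Rightarrow> real^'n^'n" where
  "laplacian E = (\<chi> i j. if i = j then real (degree E i) else if E i j then -1 else 0)"

definition multiplex_laplacian ::
  "('n::finite \<Rightarrow> 'n \<Rightarrow> bool) \<Rightarrow> ('n \<Rightarrow> 'n \<Rightarrow> bool) \<Rightarrow> ('n \<Rightarrow> real) \<Rightarrow> real^('n + 'n)^('n + 'n)" where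
  "multiplex_laplacian E1 E2 w = (\<chi> a b.
     (case (a, b) of
        (Inl i, Inl j) \<Rightarrow> laplacian E1 $ i $ j + (if i = j then w i else 0)
      | (Inr i, Inr j) \<Rightarrow> laplacian E2 $ i $ j + (if i = j then w i else 0)
      | (Inl i, Inr j) \<Rightarrow> (if i = j then - w i else 0)
      | (Inr i, Inl j) \<Rightarrow> (if i = j then - w i else 0)))"

text \<open>All matrices used here are real symmetric, so the eigenvalues are real and the
  geometric multiplicity (dimension of the eigenspace) equals the algebraic one.\<close>
definition eigenvalues :: "real^'m^'m \<Rightarrow> real set" where
  "eigenvalues A = {l. \<exists>x. x \<noteq> 0 \<and> A *v x = l *\<^sub>R x}"

definition lambda_max :: "real^'m^'m \<Rightarrow> real" where
  "lambda_max A = Max (eigenvalues A)"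

definition eigenspace :: "real^'m^'m \<Rightarrow> real \<Rightarrow> (real^'m) set" where
  "eigenspace A l = {x. A *v x = l *\<^sub>R x}"

definition simple_eigenvalue :: "real^'m^'m \<Rightarrow> real \<Rightarrow> bool" where
  "simple_eigenvalue A l \<longleftrightarrow> l \<in> eigenvalues A \<and> dim (eigenspace A l) = 1"

definition feasible_weights :: "real \<Rightarrow> ('n::finite \<Rightarrow> real) set" where
  "feasible_weights c = {w. (\<forall>i. 0 \<le> w i) \<and> (\<Sum>i\<in>UNIV. w i) = c}"

definition lambda_star ::
  "('n::finite \<Rightarrow> 'n \<Rightarrow> bool) \<Rightarrow> ('n \<Rightarrow> 'n \<Rightarrow> bool) \<Rightarrow> real \<Rightarrow> real" where
  "lambda_star E1 E2 c = Inf (lambda_max ` multiplex_laplacian E1 E2 ` feasible_weights c)"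

definition lambda_star_simple ::
  "('n::finite \<Rightarrow> 'n \<Rightarrow> bool) \<Rightarrow> ('n \<Rightarrow> 'n \<Rightarrow> bool) \<Rightarrow> real \<Rightarrow> bool" where
  "lambda_star_simple E1 E2 c \<longleftrightarrow>
     (\<exists>w\<in>feasible_weights c.
        lambda_max (multiplex_laplacian E1 E2 w) = lambda_star E1 E2 c \<and>
        simple_eigenvalue (multiplex_laplacian E1 E2 w) (lambda_star E1 E2 c))"

text \<open>The embedding problem: vectors x a in R^n (n = 2N, modelled as real^('n+'n)) and xi.
  The sum over undirected edges {i,j} of E1 and E2 is written as half the sum over
  ordered pairs (i,j) with E i j.\<close>
definition emb_feasible ::
  "('n::finite + 'n \<Rightarrow> real^('n + 'n)) \<Rightarrow> real \<Rightarrow> bool" where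
  "emb_feasible x \<xi> \<longleftrightarrow>
     (\<forall>i. norm (x (Inl i) - x (Inr i)) ^ 2 \<ge> \<xi>) \<and> (\<Sum>a\<in>UNIV. norm (x a) ^ 2) = 1"

definition emb_objective ::
  "('n::finite \<Rightarrow> 'n \<Rightarrow> bool) \<Rightarrow> ('n \<Rightarrow> 'n \<Rightarrow> bool) \<Rightarrow> real \<Rightarrow>
   ('n + 'n \<Rightarrow> real^('n + 'n)) \<Rightarrow> real \<Rightarrow> real" where
  "emb_objective E1 E2 c x \<xi> = c * \<xi>
     + (1/2) * (\<Sum>i\<in>UNIV. \<Sum>j\<in>UNIV. if E1 i j then norm (x (Inl i) - x (Inl j)) ^ 2 else 0)
     + (1/2) * (\<Sum>i\<in>UNIV. \<Sum>j\<in>UNIV. if E2 i j then norm (x (Inr i) - x (Inr j)) ^ 2 else 0)"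

definition emb_optimal ::
  "('n::finite \<Rightarrow> 'n \<Rightarrow> bool) \<Rightarrow> ('n \<Rightarrow> 'n \<Rightarrow> bool) \<Rightarrow> real \<Rightarrow>
   ('n + 'n \<Rightarrow> real^('n + 'n)) \<Rightarrow> real \<Rightarrow> bool" where
  "emb_optimal E1 E2 c x \<xi> \<longleftrightarrow> emb_feasible x \<xi> \<and>
     (\<forall>y \<eta>. emb_feasible y \<eta> \<longrightarrow> emb_objective E1 E2 c y \<eta> \<le> emb_objective E1 E2 c x \<xi>)"

end

theory Submission
  imports Defs
begin


definition symm :: "real^'m^'m \<Rightarrow> bool" where
  "symm A \<longleftrightarrow> (\<forall>i j. A$i$j = A$j$i)"

lemma symm_inner:
  assumes "symm A"
  shows "(A *v x) \<bullet> y = x \<bullet> (A *v y)"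
proof -
  have "(A *v x) \<bullet> y = (\<Sum>i\<in>UNIV. \<Sum>j\<in>UNIV. A$i$j * x$j * y$i)"
    by (simp add: inner_vec_def matrix_vector_mult_def sum_distrib_left sum_distrib_right mult_ac)
  also have "\<dots> = (\<Sum>j\<in>UNIV. \<Sum>i\<in>UNIV. A$i$j * x$j * y$i)"
    by (rule sum.swap)
  also have "\<dots> = x \<bullet> (A *v y)"
    using assms by (simp add: symm_def inner_vec_def matrix_vector_mult_def sum_distrib_left mult_ac)
  finally show ?thesis .
qed

lemma t_lemma:
  fixes a b :: real
  assumes "\<forall>t. t*a + t^2*b \<le> 0"
  shows "a = 0"
proof (rule ccontr)
  assume "a \<noteq> 0"
  define t where "t = a / (\<bar>b\<bar> + 1)"
  have p: "\<bar>b\<bar> + 1 > 0" by simp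
  have "t^2 * (-\<bar>b\<bar>) \<le> t^2*b" by (rule mult_left_mono) simp_all
  then have 1: "t*a - t^2*\<bar>b\<bar> \<le> t*a + t^2*b" by simp
  have aux: "(a/B)*a - (a/B)^2*(B-1) = a^2/B^2" if "B > 0" for B :: real
    using that by (simp add: field_simps power2_eq_square)
  have 2: "t*a - t^2*\<bar>b\<bar> = a^2 / (\<bar>b\<bar>+1)^2"
    using aux[OF p] unfolding t_def by simp
  have 3: "a^2 / (\<bar>b\<bar>+1)^2 > 0" using \<open>a \<noteq> 0\<close> p by simp
  have 4: "t*a + t^2*b \<le> 0" using assms by blast
  show False using 1 2 3 4 by linarith
qed

lemma psd_eq:
  fixes A :: "real^'m^'m"
  assumes s: "symm A" and le: "\<forall>w. w \<bullet> (A *v w) \<le> M * (w \<bullet> w)"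
    and eq: "z \<bullet> (A *v z) = M * (z \<bullet> z)"
  shows "A *v z = M *\<^sub>R z"
proof -
  have "y \<bullet> (A *v z - M *\<^sub>R z) = 0" for y
  proof -
    have "\<forall>t. t*(2*(y \<bullet> (A *v z - M *\<^sub>R z))) + t^2*(y \<bullet> (A *v y) - M*(y \<bullet> y)) \<le> 0"
    proof
      fix t :: real
      have "(z + t *\<^sub>R y) \<bullet> (A *v (z + t *\<^sub>R y)) \<le> M * ((z + t *\<^sub>R y) \<bullet> (z + t *\<^sub>R y))"
        using le by blast
      moreover have "(z + t *\<^sub>R y) \<bullet> (A *v (z + t *\<^sub>R y)) = z \<bullet> (A *v z) + 2*t*(y \<bullet> (A *v z)) + t^2 * (y \<bullet> (A *v y))"
        using symm_inner[OF s, of y z]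
        by (simp add: matrix_vector_right_distrib matrix_vector_mult_scaleR inner_add_left inner_add_right power2_eq_square inner_commute algebra_simps)
      moreover have "(z + t *\<^sub>R y) \<bullet> (z + t *\<^sub>R y) = z \<bullet> z + 2*t*(y \<bullet> z) + t^2*(y \<bullet> y)"
        by (simp add: inner_add_left inner_add_right power2_eq_square inner_commute algebra_simps)
      moreover have "z \<bullet> y = y \<bullet> z" by (rule inner_commute)
      moreover have "z \<bullet> (A *v y) = y \<bullet> (A *v z)" by (metis symm_inner[OF s] inner_commute)
      ultimately show "t*(2*(y \<bullet> (A *v z - M *\<^sub>R z))) + t^2*(y \<bullet> (A *v y) - M*(y \<bullet> y)) \<le> 0"
        using eq by (simp add: inner_diff_right power2_eq_square algebra_simps)
    qed
    then show ?thesis using t_lemma by fastforce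
  qed
  from this[of "A *v z - M *\<^sub>R z"] show ?thesis by simp
qed

lemma eig_finite:
  fixes A :: "real^'m^'m"
  assumes s: "symm A"
  shows "finite (eigenvalues A)"
proof -
  define f where "f l = (SOME x. x \<noteq> 0 \<and> A *v x = l *\<^sub>R x)" for l
  have f: "f l \<noteq> 0 \<and> A *v f l = l *\<^sub>R f l" if "l \<in> eigenvalues A" for l
    using that unfolding eigenvalues_def f_def by (metis (mono_tags, lifting) mem_Collect_eq someI_ex)
  have inj: "inj_on f (eigenvalues A)"
  proof (rule inj_onI)
    fix l1 l2 assume a: "l1 \<in> eigenvalues A" "l2 \<in> eigenvalues A" "f l1 = f l2"
    then have "l1 *\<^sub>R f l1 = l2 *\<^sub>R f l1" using f by metis
    then show "l1 = l2" using f a by (simp add: scaleR_cancel_right)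
  qed
  have orth: "pairwise orthogonal (f ` eigenvalues A)"
  proof (rule pairwiseI)
    fix x y assume "x \<in> f ` eigenvalues A" "y \<in> f ` eigenvalues A" "x \<noteq> y"
    then obtain l1 l2 where l: "l1 \<in> eigenvalues A" "l2 \<in> eigenvalues A" "x = f l1" "y = f l2" "l1 \<noteq> l2"
      by blast
    have "l1 * (x \<bullet> y) = (A *v x) \<bullet> y" using f l by simp
    also have "\<dots> = x \<bullet> (A *v y)" by (rule symm_inner[OF s])
    also have "\<dots> = l2 * (x \<bullet> y)" using f l by simp
    finally show "orthogonal x y" using l unfolding orthogonal_def by simp
  qed
  have "0 \<notin> f ` eigenvalues A" using f by auto
  then have "independent (f ` eigenvalues A)" using orth pairwise_orthogonal_independent by blast
  then have "finite (f ` eigenvalues A)" by (rule finiteI_independent)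
  then show ?thesis using inj finite_imageD by blast
qed

lemma rayleigh:
  fixes A :: "real^'m^'m"
  assumes s: "symm A"
  shows "lambda_max A \<in> eigenvalues A" and "\<And>z. z \<bullet> (A *v z) \<le> lambda_max A * (z \<bullet> z)"
proof -
  let ?S = "sphere (0::real^'m) 1"
  obtain k :: 'm where True by simp
  have "axis k (1::real) \<in> ?S" by (simp add: norm_axis_1)
  then have ne: "?S \<noteq> {}" by blast
  have "continuous_on ?S (\<lambda>z. z \<bullet> (A *v z))" by (intro continuous_intros)
  then obtain z0 where z0: "z0 \<in> ?S" "\<forall>z\<in>?S. z \<bullet> (A *v z) \<le> z0 \<bullet> (A *v z0)"
    using continuous_attains_sup[OF compact_sphere ne] by blast
  define M where "M = z0 \<bullet> (A *v z0)"
  have le: "\<forall>w. w \<bullet> (A *v w) \<le> M * (w \<bullet> w)"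
  proof
    fix w :: "real^'m"
    show "w \<bullet> (A *v w) \<le> M * (w \<bullet> w)"
    proof (cases "w = 0")
      case True then show ?thesis by simp
    next
      case False
      then have n: "norm w > 0" by simp
      have "(w /\<^sub>R norm w) \<in> ?S" using False by simp
      then have "(w /\<^sub>R norm w) \<bullet> (A *v (w /\<^sub>R norm w)) \<le> M" using z0 M_def by blast
      moreover have "(w /\<^sub>R norm w) \<bullet> (A *v (w /\<^sub>R norm w)) = (w \<bullet> (A *v w)) / (w \<bullet> w)"
        by (simp add: matrix_vector_mult_scaleR power2_norm_eq_inner[symmetric] power2_eq_square divide_inverse mult_ac)
      ultimately show ?thesis using n by (simp add: divide_le_eq power2_norm_eq_inner[symmetric])
    qed
  qed
  have z0n: "z0 \<bullet> z0 = 1" using z0 by (simp add: power2_norm_eq_inner[symmetric])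
  have eig: "A *v z0 = M *\<^sub>R z0"
    by (rule psd_eq[OF s le]) (simp add: M_def z0n)
  have z0nz: "z0 \<noteq> 0" using z0n by (metis inner_zero_left zero_neq_one)
  have Min: "M \<in> eigenvalues A" using eig z0nz unfolding eigenvalues_def by blast
  have ub: "l \<le> M" if "l \<in> eigenvalues A" for l
  proof -
    have "\<exists>x. x \<noteq> 0 \<and> A *v x = l *\<^sub>R x" using that by (simp add: eigenvalues_def)
    then obtain x where x: "x \<noteq> 0" "A *v x = l *\<^sub>R x" by blast
    have "x \<bullet> (A *v x) = l * (x \<bullet> x)" using x by simp
    then have "l * (x \<bullet> x) \<le> M * (x \<bullet> x)" using le by metis
    moreover have "x \<bullet> x > 0" using x by simp
    ultimately show ?thesis by (simp add: mult_le_cancel_right_pos)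
  qed
  have lm: "lambda_max A = M"
    unfolding lambda_max_def by (rule Max_eqI[OF eig_finite[OF s]]) (use ub Min in auto)
  show "lambda_max A \<in> eigenvalues A" using lm Min by simp
  show "\<And>z. z \<bullet> (A *v z) \<le> lambda_max A * (z \<bullet> z)" using le lm by simp
qed



lemma if_mult0: "(if P then a else 0) * (b::real) = (if P then a*b else 0)" by simp

lemma sum_UNIV_Plus:
  "(\<Sum>x\<in>(UNIV::('a::finite + 'b::finite) set). f x) = (\<Sum>i\<in>UNIV. f (Inl i)) + (\<Sum>j\<in>UNIV. f (Inr j))"
proof -
  have "(\<Sum>x\<in>(UNIV::('a + 'b) set). f x) = (\<Sum>x\<in>(UNIV <+> UNIV). f x)" by simp
  also have "\<dots> = (\<Sum>i\<in>UNIV. f (Inl i)) + (\<Sum>j\<in>UNIV. f (Inr j))"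
    by (subst sum.Plus) (simp_all add: comp_def)
  finally show ?thesis .
qed

lemma lap_mv:
  fixes E :: "'n::finite \<Rightarrow> 'n \<Rightarrow> bool"
  assumes g: "simple_graph E"
  shows "(laplacian E *v a) $ i = (\<Sum>j\<in>UNIV. if E i j then a$i - a$j else 0)"
proof -
  have irr: "\<not> E i i" using g by (simp add: simple_graph_def)
  have deg: "real (degree E i) = (\<Sum>j\<in>UNIV. if E i j then 1 else 0)"
    by (simp add: degree_def sum.If_cases)
  have "(laplacian E *v a) $ i = (\<Sum>j\<in>UNIV. (if i = j then real (degree E i) else if E i j then -1 else 0) * a$j)"
    by (simp add: laplacian_def matrix_vector_mult_def)
  also have "\<dots> = (\<Sum>j\<in>UNIV. (if i = j then real (degree E i) * a$j else 0)) + (\<Sum>j\<in>UNIV. if E i j then - a$j else 0)"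
    by (subst sum.distrib[symmetric]) (rule sum.cong, auto simp: irr)
  also have "\<dots> = real (degree E i) * a$i + (\<Sum>j\<in>UNIV. if E i j then - a$j else 0)"
    by simp
  also have "\<dots> = (\<Sum>j\<in>UNIV. if E i j then a$i else 0) + (\<Sum>j\<in>UNIV. if E i j then - a$j else 0)"
    by (simp add: deg sum_distrib_right if_mult0 cong: if_cong)
  also have "\<dots> = (\<Sum>j\<in>UNIV. if E i j then a$i - a$j else 0)"
    by (subst sum.distrib[symmetric]) (rule sum.cong, auto)
  finally show ?thesis .
qed

lemma lap_quad:
  fixes E :: "'n::finite \<Rightarrow> 'n \<Rightarrow> bool"
  assumes g: "simple_graph E"
  shows "a \<bullet> (laplacian E *v a) = (1/2) * (\<Sum>i\<in>UNIV. \<Sum>j\<in>UNIV. if E i j then (a$i - a$j)^2 else 0)"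
proof -
  have sy: "E i j = E j i" for i j using g unfolding simple_graph_def by blast
  define S where "S = (\<Sum>i\<in>UNIV. \<Sum>j\<in>UNIV. if E i j then a$i * (a$i - a$j) else 0)"
  have L: "a \<bullet> (laplacian E *v a) = S"
    unfolding S_def inner_vec_def lap_mv[OF g] by (simp add: sum_distrib_left if_distrib cong: if_cong)
  have "(\<Sum>i\<in>UNIV. \<Sum>j\<in>UNIV. if E i j then a$j * (a$j - a$i) else 0)
      = (\<Sum>j\<in>UNIV. \<Sum>i\<in>UNIV. if E i j then a$j * (a$j - a$i) else 0)" by (rule sum.swap)
  also have "\<dots> = S" unfolding S_def by (simp add: sy)
  finally have S2: "(\<Sum>i\<in>UNIV. \<Sum>j\<in>UNIV. if E i j then a$j * (a$j - a$i) else 0) = S" .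
  have "(\<Sum>i\<in>UNIV. \<Sum>j\<in>UNIV. if E i j then (a$i - a$j)^2 else 0)
     = (\<Sum>i\<in>UNIV. \<Sum>j\<in>UNIV. (if E i j then a$i * (a$i - a$j) else 0) + (if E i j then a$j * (a$j - a$i) else 0))"
    by (rule sum.cong, simp, rule sum.cong, simp, simp add: power2_eq_square algebra_simps)
  also have "\<dots> = S + (\<Sum>i\<in>UNIV. \<Sum>j\<in>UNIV. if E i j then a$j * (a$j - a$i) else 0)"
    unfolding S_def by (simp add: sum.distrib)
  also have "\<dots> = S + S" using S2 by simp
  finally show ?thesis using L by simp
qed

lemma lap_symm:
  assumes g: "simple_graph E"
  shows "symm (laplacian E)"
  using g unfolding symm_def laplacian_def simple_graph_def by auto

definition Qf :: "('n::finite \<Rightarrow> 'n \<Rightarrow> bool) \<Rightarrow> ('n \<Rightarrow> 'n \<Rightarrow> bool) \<Rightarrow> ('n \<Rightarrow> real) \<Rightarrow> real^('n+'n) \<Rightarrow> real" where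
  "Qf E1 E2 w z = (1/2) * (\<Sum>i\<in>UNIV. \<Sum>j\<in>UNIV. if E1 i j then (z$Inl i - z$Inl j)^2 else 0)
     + (1/2) * (\<Sum>i\<in>UNIV. \<Sum>j\<in>UNIV. if E2 i j then (z$Inr i - z$Inr j)^2 else 0)
     + (\<Sum>i\<in>UNIV. w i * (z$Inl i - z$Inr i)^2)"

definition la :: "real^('n::finite+'n) \<Rightarrow> real^'n" where "la z = (\<chi> i. z$Inl i)"
definition lb :: "real^('n::finite+'n) \<Rightarrow> real^'n" where "lb z = (\<chi> i. z$Inr i)"

lemma la_nth [simp]: "la z $ i = z $ Inl i" by (simp add: la_def)
lemma lb_nth [simp]: "lb z $ i = z $ Inr i" by (simp add: lb_def)

lemma ml_mv_l:
  "(multiplex_laplacian E1 E2 w *v z) $ Inl i = (laplacian E1 *v la z) $ i + w i * (z$Inl i - z$Inr i)"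
proof -
  have "(multiplex_laplacian E1 E2 w *v z) $ Inl i =
     (\<Sum>j\<in>UNIV. (laplacian E1 $ i $ j + (if i = j then w i else 0)) * z$Inl j) + (\<Sum>j\<in>UNIV. (if i = j then - w i else 0) * z$Inr j)"
    by (simp add: matrix_vector_mult_def multiplex_laplacian_def sum_UNIV_Plus)
  also have "\<dots> = (\<Sum>j\<in>UNIV. laplacian E1 $ i $ j * z$Inl j) + w i * z$Inl i - w i * z$Inr i"
    by (simp add: distrib_right sum.distrib if_mult0)
  finally show ?thesis by (simp add: matrix_vector_mult_def algebra_simps)
qed

lemma ml_mv_r:
  "(multiplex_laplacian E1 E2 w *v z) $ Inr i = (laplacian E2 *v lb z) $ i + w i * (z$Inr i - z$Inl i)"
proof -
  have "(multiplex_laplacian E1 E2 w *v z) $ Inr i =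
     (\<Sum>j\<in>UNIV. (if i = j then - w i else 0) * z$Inl j) + (\<Sum>j\<in>UNIV. (laplacian E2 $ i $ j + (if i = j then w i else 0)) * z$Inr j)"
    by (simp add: matrix_vector_mult_def multiplex_laplacian_def sum_UNIV_Plus)
  also have "\<dots> = (\<Sum>j\<in>UNIV. laplacian E2 $ i $ j * z$Inr j) + w i * z$Inr i - w i * z$Inl i"
    by (simp add: distrib_right sum.distrib if_mult0)
  finally show ?thesis by (simp add: matrix_vector_mult_def algebra_simps)
qed

lemma inner_Plus: "(z::real^('n::finite+'n)) \<bullet> y = la z \<bullet> la y + lb z \<bullet> lb y"
  by (simp add: inner_vec_def sum_UNIV_Plus la_def lb_def)

lemma ml_quad:
  assumes g1: "simple_graph E1" and g2: "simple_graph E2"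
  shows "z \<bullet> (multiplex_laplacian E1 E2 w *v z) = Qf E1 E2 w z"
proof -
  have "z \<bullet> (multiplex_laplacian E1 E2 w *v z)
      = (\<Sum>i\<in>UNIV. z$Inl i * ((laplacian E1 *v la z) $ i + w i * (z$Inl i - z$Inr i)))
      + (\<Sum>i\<in>UNIV. z$Inr i * ((laplacian E2 *v lb z) $ i + w i * (z$Inr i - z$Inl i)))"
    by (simp add: inner_vec_def sum_UNIV_Plus ml_mv_l ml_mv_r)
  also have "\<dots> = la z \<bullet> (laplacian E1 *v la z) + lb z \<bullet> (laplacian E2 *v lb z)
        + (\<Sum>i\<in>UNIV. w i * (z$Inl i - z$Inr i)^2)"
    by (simp add: inner_vec_def la_def lb_def sum.distrib[symmetric] power2_eq_square algebra_simps)
  also have "\<dots> = Qf E1 E2 w z"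
    unfolding Qf_def lap_quad[OF g1] lap_quad[OF g2] by (simp cong: if_cong)
  finally show ?thesis .
qed

lemma ml_symm:
  assumes g1: "simple_graph E1" and g2: "simple_graph E2"
  shows "symm (multiplex_laplacian E1 E2 w)"
  using lap_symm[OF g1] lap_symm[OF g2] unfolding symm_def multiplex_laplacian_def
  by (auto split: sum.split)

lemma Qf_diff:
  "Qf E1 E2 w z - Qf E1 E2 w' z = (\<Sum>i\<in>UNIV. (w i - w' i) * (z$Inl i - z$Inr i)^2)"
  by (simp add: Qf_def sum_subtractf[symmetric] algebra_simps)

lemma comp_diff_sq: "((z::real^'m)$p - z$q)^2 \<le> 4 * (z \<bullet> z)"
proof -
  have a: "(z$p)^2 \<le> z \<bullet> z" using component_le_norm_cart[of z p]
    by (metis abs_ge_zero norm_ge_zero power2_norm_eq_inner power_mono real_sqrt_abs real_sqrt_pow2_iff sqrt_le_D abs_le_square_iff)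
  have b: "(z$q)^2 \<le> z \<bullet> z" using component_le_norm_cart[of z q]
    by (metis abs_ge_zero norm_ge_zero power2_norm_eq_inner power_mono real_sqrt_abs real_sqrt_pow2_iff sqrt_le_D abs_le_square_iff)
  have "(z$p - z$q)^2 \<le> 2*(z$p)^2 + 2*(z$q)^2"
    using zero_le_power2[of "z$p + z$q"] unfolding power2_diff power2_sum by linarith
  then show ?thesis using a b by linarith
qed



lemma eig_le_lmax: "symm A \<Longrightarrow> l \<in> eigenvalues A \<Longrightarrow> l \<le> lambda_max A"
  unfolding lambda_max_def by (rule Max_ge[OF eig_finite])

lemma lmax_eigvec:
  assumes "symm A"
  obtains x where "x \<noteq> 0" "A *v x = lambda_max A *\<^sub>R x"
proof -
  have "\<exists>x. x \<noteq> 0 \<and> A *v x = lambda_max A *\<^sub>R x"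
    using rayleigh(1)[OF assms] by (simp add: eigenvalues_def)
  then show ?thesis using that by blast
qed

lemma lmax_le:
  fixes A :: "real^'m^'m"
  assumes s: "symm A" and b: "\<forall>z. z \<bullet> (A *v z) \<le> K * (z \<bullet> z)"
  shows "lambda_max A \<le> K"
proof -
  obtain x where x: "x \<noteq> 0" "A *v x = lambda_max A *\<^sub>R x" using lmax_eigvec[OF s] by blast
  have "lambda_max A * (x \<bullet> x) = x \<bullet> (A *v x)" using x by simp
  also have "\<dots> \<le> K * (x \<bullet> x)" using b by blast
  finally have "lambda_max A * (x \<bullet> x) \<le> K * (x \<bullet> x)" .
  moreover have "x \<bullet> x > 0" using x by simp
  ultimately show ?thesis by (simp add: mult_le_cancel_right_pos)
qed

lemma quad_scale:
  fixes A :: "real^'m^'m"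
  shows "(y /\<^sub>R norm y) \<bullet> (A *v (y /\<^sub>R norm y)) = (y \<bullet> (A *v y)) / (y \<bullet> y)"
  by (simp add: matrix_vector_mult_scaleR power2_norm_eq_inner[symmetric] power2_eq_square divide_inverse mult_ac)

lemma gap:
  fixes A :: "real^'m^'m"
  assumes s: "symm A" and V: "V \<noteq> 0" and sp: "eigenspace A (lambda_max A) \<subseteq> span {V}"
  shows "\<exists>g < lambda_max A. \<forall>y. y \<bullet> V = 0 \<longrightarrow> y \<bullet> (A *v y) \<le> g * (y \<bullet> y)"
proof -
  let ?M = "lambda_max A"
  let ?S = "sphere (0::real^'m) 1 \<inter> {y. V \<bullet> y = 0}"
  have cS: "compact ?S" by (intro compact_Int_closed compact_sphere closed_hyperplane)
  show ?thesis
  proof (cases "?S = {}")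
    case True
    have "y \<bullet> (A *v y) \<le> (?M - 1) * (y \<bullet> y)" if "y \<bullet> V = 0" for y
    proof (cases "y = 0")
      case True then show ?thesis by simp
    next
      case False
      have "y /\<^sub>R norm y \<in> ?S" using False that by (simp add: inner_commute)
      then show ?thesis using True by blast
    qed
    then show ?thesis by (intro exI[of _ "?M - 1"]) auto
  next
    case False
    have "continuous_on ?S (\<lambda>z. z \<bullet> (A *v z))" by (intro continuous_intros)
    then obtain y0 where y0: "y0 \<in> ?S" "\<forall>z\<in>?S. z \<bullet> (A *v z) \<le> y0 \<bullet> (A *v y0)"
      using continuous_attains_sup[OF cS False] by blast
    define g where "g = y0 \<bullet> (A *v y0)"
    have y0n: "y0 \<bullet> y0 = 1" using y0 by (simp add: power2_norm_eq_inner[symmetric])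
    have "g \<le> ?M" using rayleigh(2)[OF s, of y0] y0n g_def by simp
    moreover have "g \<noteq> ?M"
    proof
      assume gM: "g = ?M"
      have "A *v y0 = ?M *\<^sub>R y0"
        by (rule psd_eq[OF s]) (use rayleigh(2)[OF s] gM g_def y0n in auto)
      then have "y0 \<in> span {V}" using sp unfolding eigenspace_def by blast
      then obtain k where k: "y0 = k *\<^sub>R V" by (auto simp: span_singleton)
      have "V \<bullet> y0 = 0" using y0 by simp
      then have "k * (V \<bullet> V) = 0" using k by simp
      then have "k = 0" using V by simp
      then show False using k y0n by simp
    qed
    ultimately have glt: "g < ?M" by simp
    have "y \<bullet> (A *v y) \<le> g * (y \<bullet> y)" if "y \<bullet> V = 0" for y
    proof (cases "y = 0")
      case True then show ?thesis by simp
    next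
      case False
      have "y /\<^sub>R norm y \<in> ?S" using False that by (simp add: inner_commute)
      then have "(y /\<^sub>R norm y) \<bullet> (A *v (y /\<^sub>R norm y)) \<le> g" using y0 g_def by blast
      then have "(y \<bullet> (A *v y)) / (y \<bullet> y) \<le> g" by (simp only: quad_scale)
      moreover have "y \<bullet> y > 0" using False by simp
      ultimately show ?thesis by (simp add: divide_le_eq)
    qed
    then show ?thesis using glt by blast
  qed
qed

lemma rot:
  fixes a :: "real^'m"
  assumes "2 \<le> CARD('m)"
  shows "\<exists>Q \<gamma> k. rotation_matrix Q \<and> Q *v a = \<gamma> *\<^sub>R axis k 1"
proof (cases "a = 0")
  case True
  then show ?thesis
    by (intro exI[of _ "mat 1"] exI[of _ 0]) (simp add: rotation_matrix_def orthogonal_matrix_id)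
next
  case False
  obtain k :: 'm where True by simp
  have "norm (a /\<^sub>R norm a) = 1" using False by simp
  then obtain A where A: "rotation_matrix A" "A *v axis k 1 = a /\<^sub>R norm a"
    using rotation_matrix_exists_basis[OF assms] by metis
  have o: "transpose A ** A = mat 1" using A(1) by (simp add: rotation_matrix_def orthogonal_matrix_def)
  have r: "rotation_matrix (transpose A)" using A(1) by (simp add: rotation_matrix_def)
  have "a = norm a *\<^sub>R (a /\<^sub>R norm a)" using False by simp
  then have "transpose A *v a = norm a *\<^sub>R (transpose A *v (A *v axis k 1))"
    using A(2) by (metis matrix_vector_mult_scaleR)
  also have "\<dots> = norm a *\<^sub>R axis k 1" by (simp add: matrix_vector_mul_assoc o)
  finally show ?thesis using r by blast
qed

definition Vv :: "real^'n \<Rightarrow> real^('n::finite + 'n)" where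
  "Vv v = (\<chi> a. case a of Inl i \<Rightarrow> v $ i | Inr i \<Rightarrow> 0)"

lemma Vv_l [simp]: "Vv v $ Inl i = v $ i" and Vv_r [simp]: "Vv v $ Inr i = 0"
  by (simp_all add: Vv_def)

lemma la_Vv [simp]: "la (Vv v) = v" and lb_Vv [simp]: "lb (Vv v) = 0"
  by (simp_all add: vec_eq_iff)

lemma Vv_inner: "Vv v \<bullet> Vv v = v \<bullet> v"
  by (simp add: inner_Plus)

lemma Vv_nz: "v \<noteq> 0 \<Longrightarrow> Vv v \<noteq> 0"
  by (metis la_Vv lb_Vv vec_eq_iff zero_index la_nth)

lemma Qf_ab:
  assumes g1: "simple_graph E1" and g2: "simple_graph E2"
  shows "Qf E1 E2 w z = la z \<bullet> (laplacian E1 *v la z) + lb z \<bullet> (laplacian E2 *v lb z)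
        + (\<Sum>i\<in>UNIV. w i * (z$Inl i - z$Inr i)^2)"
  unfolding Qf_def lap_quad[OF g1] lap_quad[OF g2] by (simp cong: if_cong)



context
  fixes E1 E2 :: "'n::finite \<Rightarrow> 'n \<Rightarrow> bool" and v :: "real^'n"
  assumes g1: "simple_graph E1" and g2: "simple_graph E2"
    and gt: "lambda_max (laplacian E1) > lambda_max (laplacian E2)"
    and vnz: "v \<noteq> 0" and veig: "laplacian E1 *v v = lambda_max (laplacian E1) *\<^sub>R v"
begin

lemma msymm: "symm (multiplex_laplacian E1 E2 w)"
  by (rule ml_symm[OF g1 g2])

lemma mquad: "z \<bullet> (multiplex_laplacian E1 E2 w *v z) = Qf E1 E2 w z"
  by (rule ml_quad[OF g1 g2])

lemma vv_pos: "v \<bullet> v > 0" using vnz by simp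

lemma QV: "Qf E1 E2 w (Vv v) = lambda_max (laplacian E1) * (v \<bullet> v) + (\<Sum>i\<in>UNIV. w i * (v$i)^2)"
  unfolding Qf_ab[OF g1 g2] using veig by simp

lemma lmax_ge:
  assumes "\<forall>i. 0 \<le> w i"
  shows "lambda_max (laplacian E1) \<le> lambda_max (multiplex_laplacian E1 E2 w)"
proof -
  have "Qf E1 E2 w (Vv v) \<le> lambda_max (multiplex_laplacian E1 E2 w) * (v \<bullet> v)"
    using rayleigh(2)[OF msymm[of w], of "Vv v"] by (simp add: mquad Vv_inner)
  moreover have "(\<Sum>i\<in>UNIV. w i * (v$i)^2) \<ge> 0" using assms by (simp add: sum_nonneg)
  ultimately have "lambda_max (laplacian E1) * (v \<bullet> v) \<le> lambda_max (multiplex_laplacian E1 E2 w) * (v \<bullet> v)"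
    by (simp add: QV)
  then show ?thesis using vv_pos by (simp add: mult_le_cancel_right_pos)
qed

lemma feas_ne: "0 \<le> c \<Longrightarrow> (\<lambda>_::'n. c / real CARD('n)) \<in> feasible_weights c"
  by (simp add: feasible_weights_def)

lemma mu_ge:
  assumes "0 \<le> c" shows "lambda_max (laplacian E1) \<le> lambda_star E1 E2 c"
proof -
  have ne: "lambda_max ` multiplex_laplacian E1 E2 ` feasible_weights c \<noteq> {}"
    using feas_ne[OF assms] by blast
  show ?thesis unfolding lambda_star_def
    by (rule cInf_greatest[OF ne]) (use lmax_ge in \<open>auto simp: feasible_weights_def\<close>)
qed

lemma mu_le: "w \<in> feasible_weights c \<Longrightarrow> lambda_star E1 E2 c \<le> lambda_max (multiplex_laplacian E1 E2 w)"
  unfolding lambda_star_def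
  by (rule cInf_lower) (use lmax_ge in \<open>auto simp: feasible_weights_def intro!: bdd_belowI[of _ "lambda_max (laplacian E1)"]\<close>)

lemma mu0: "lambda_star E1 E2 0 = lambda_max (laplacian E1)"
proof -
  let ?l1 = "lambda_max (laplacian E1)"
  have f: "(\<lambda>_. 0) \<in> feasible_weights 0" by (simp add: feasible_weights_def)
  have "lambda_max (multiplex_laplacian E1 E2 (\<lambda>_. 0)) \<le> ?l1"
  proof (rule lmax_le[OF msymm], rule allI)
    fix z :: "real^('n+'n)"
    have a: "la z \<bullet> (laplacian E1 *v la z) \<le> ?l1 * (la z \<bullet> la z)"
      by (rule rayleigh(2)[OF lap_symm[OF g1]])
    have b: "lb z \<bullet> (laplacian E2 *v lb z) \<le> lambda_max (laplacian E2) * (lb z \<bullet> lb z)"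
      by (rule rayleigh(2)[OF lap_symm[OF g2]])
    have "lambda_max (laplacian E2) * (lb z \<bullet> lb z) \<le> ?l1 * (lb z \<bullet> lb z)"
      using gt by (simp add: mult_right_mono)
    then show "z \<bullet> (multiplex_laplacian E1 E2 (\<lambda>_. 0) *v z) \<le> ?l1 * (z \<bullet> z)"
      using a b by (simp add: mquad Qf_ab[OF g1 g2] inner_Plus[of z z] distrib_left)
  qed
  then show ?thesis using mu_le[OF f] mu_ge[of 0] by simp
qed

lemma ml_V:
  assumes "\<forall>i. w i * v$i = 0"
  shows "multiplex_laplacian E1 E2 w *v Vv v = lambda_max (laplacian E1) *\<^sub>R Vv v"
proof -
  have "(multiplex_laplacian E1 E2 w *v Vv v) $ a = (lambda_max (laplacian E1) *\<^sub>R Vv v) $ a" for a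
  proof (cases a)
    case (Inl i)
    then show ?thesis using assms veig by (simp add: ml_mv_l vec_eq_iff)
  next
    case (Inr i)
    then show ?thesis using assms by (simp add: ml_mv_r mult.commute)
  qed
  then show ?thesis by (simp add: vec_eq_iff)
qed

lemma top_space:
  assumes w: "w \<in> feasible_weights c"
    and lm: "lambda_max (multiplex_laplacian E1 E2 w) = lambda_max (laplacian E1)"
    and se: "simple_eigenvalue (multiplex_laplacian E1 E2 w) (lambda_max (laplacian E1))"
  shows "(\<forall>i. w i * v$i = 0)"
    and "multiplex_laplacian E1 E2 w *v Vv v = lambda_max (laplacian E1) *\<^sub>R Vv v"
    and "eigenspace (multiplex_laplacian E1 E2 w) (lambda_max (laplacian E1)) \<subseteq> span {Vv v}"
proof -
  let ?l1 = "lambda_max (laplacian E1)"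
  have wnn: "\<forall>i. 0 \<le> w i" using w by (simp add: feasible_weights_def)
  have "Qf E1 E2 w (Vv v) \<le> ?l1 * (v \<bullet> v)"
    using rayleigh(2)[OF msymm[of w], of "Vv v"] lm by (simp add: mquad Vv_inner)
  then have s0: "(\<Sum>i\<in>UNIV. w i * (v$i)^2) \<le> 0" by (simp add: QV)
  have nn: "\<forall>i\<in>UNIV. 0 \<le> w i * (v$i)^2" using wnn by simp
  have s1: "0 \<le> (\<Sum>i\<in>UNIV. w i * (v$i)^2)" using nn by (simp add: sum_nonneg)
  have "(\<Sum>i\<in>UNIV. w i * (v$i)^2) = 0" using s0 s1 by linarith
  then have "\<forall>i\<in>UNIV. w i * (v$i)^2 = 0" using nn by (simp add: sum_nonneg_eq_0_iff)
  then show wv: "\<forall>i. w i * v$i = 0" by (simp add: power2_eq_square)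
  show mv: "multiplex_laplacian E1 E2 w *v Vv v = ?l1 *\<^sub>R Vv v" by (rule ml_V[OF wv])
  have sub: "{Vv v} \<subseteq> eigenspace (multiplex_laplacian E1 E2 w) ?l1"
    using mv by (simp add: eigenspace_def)
  have ind: "independent {Vv v}" using Vv_nz[OF vnz] by simp
  have d: "dim (eigenspace (multiplex_laplacian E1 E2 w) ?l1) \<le> card {Vv v}"
    using se by (simp add: simple_eigenvalue_def)
  show "eigenspace (multiplex_laplacian E1 E2 w) ?l1 \<subseteq> span {Vv v}"
    by (rule card_ge_dim_independent[OF sub ind d])
qed

end


context
  fixes E1 E2 :: "'n::finite \<Rightarrow> 'n \<Rightarrow> bool" and v :: "real^'n"
  assumes g1: "simple_graph E1" and g2: "simple_graph E2"
    and gt: "lambda_max (laplacian E1) > lambda_max (laplacian E2)"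
    and vnz: "v \<noteq> 0" and veig: "laplacian E1 *v v = lambda_max (laplacian E1) *\<^sub>R v"
begin

lemmas ctx = g1 g2 gt vnz veig

lemma extend:
  assumes c0: "0 \<le> c'" and ss: "lambda_star_simple E1 E2 c'"
    and eq: "lambda_star E1 E2 c' = lambda_max (laplacian E1)"
    and i0: "v $ i0 = 0"
  shows "\<exists>d>0. \<forall>t. 0 \<le> t \<and> t \<le> d \<longrightarrow> lambda_star E1 E2 (c' + t) = lambda_max (laplacian E1)"
proof -
  let ?l1 = "lambda_max (laplacian E1)"
  obtain w0 where w0: "w0 \<in> feasible_weights c'"
    "lambda_max (multiplex_laplacian E1 E2 w0) = ?l1"
    "simple_eigenvalue (multiplex_laplacian E1 E2 w0) ?l1"
    using ss eq unfolding lambda_star_simple_def by auto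
  note ts = top_space[OF ctx w0]
  obtain g where g: "g < ?l1" "\<forall>y. y \<bullet> Vv v = 0 \<longrightarrow> y \<bullet> (multiplex_laplacian E1 E2 w0 *v y) \<le> g * (y \<bullet> y)"
    using gap[OF ml_symm[OF g1 g2] Vv_nz[OF vnz]] ts(3) w0(2) by metis
  define d where "d = (?l1 - g) / 8"
  have dpos: "d > 0" using g(1) by (simp add: d_def)
  have "lambda_star E1 E2 (c' + t) = ?l1" if t: "0 \<le> t" "t \<le> d" for t
  proof -
    define w where "w = (\<lambda>i. w0 i + (if i = i0 then t else 0))"
    have w0nn: "\<forall>i. 0 \<le> w0 i" and w0s: "(\<Sum>i\<in>UNIV. w0 i) = c'"
      using w0(1) by (auto simp: feasible_weights_def)
    have wf: "w \<in> feasible_weights (c' + t)"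
      using w0nn w0s t(1) by (simp add: feasible_weights_def w_def sum.distrib)
    have wv: "\<forall>i. w i * v$i = 0" using ts(1) i0 by (simp add: w_def distrib_right)
    have mv: "multiplex_laplacian E1 E2 w *v Vv v = ?l1 *\<^sub>R Vv v" by (rule ml_V[OF ctx wv])
    have "lambda_max (multiplex_laplacian E1 E2 w) \<le> ?l1"
    proof (rule ccontr)
      let ?l = "lambda_max (multiplex_laplacian E1 E2 w)"
      assume "\<not> ?l \<le> ?l1"
      then have lgt: "?l > ?l1" by simp
      obtain z where z: "z \<noteq> 0" "multiplex_laplacian E1 E2 w *v z = ?l *\<^sub>R z"
        using lmax_eigvec[OF ml_symm[OF g1 g2]] by blast
      have "?l * (z \<bullet> Vv v) = (multiplex_laplacian E1 E2 w *v z) \<bullet> Vv v" using z by simp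
      also have "\<dots> = z \<bullet> (multiplex_laplacian E1 E2 w *v Vv v)" by (rule symm_inner[OF ml_symm[OF g1 g2]])
      also have "\<dots> = ?l1 * (z \<bullet> Vv v)" using mv by simp
      finally have "z \<bullet> Vv v = 0" using lgt by simp
      then have q0: "Qf E1 E2 w0 z \<le> g * (z \<bullet> z)" using g(2) by (simp add: ml_quad[OF g1 g2])
      have "Qf E1 E2 w z - Qf E1 E2 w0 z = t * (z$Inl i0 - z$Inr i0)^2"
        by (simp add: Qf_diff w_def if_mult0)
      also have "\<dots> \<le> t * (4 * (z \<bullet> z))" by (rule mult_left_mono[OF comp_diff_sq t(1)])
      finally have "Qf E1 E2 w z \<le> (g + 4*t) * (z \<bullet> z)" using q0 by (simp add: algebra_simps)
      moreover have "Qf E1 E2 w z = ?l * (z \<bullet> z)" using z by (simp add: ml_quad[OF g1 g2, symmetric])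
      moreover have "z \<bullet> z > 0" using z by simp
      ultimately have "?l \<le> g + 4*t" by (simp add: mult_le_cancel_right_pos)
      moreover have "g + 4*t < ?l1" using t(2) g(1) by (simp add: d_def)
      ultimately show False using lgt by simp
    qed
    then show ?thesis using mu_le[OF ctx wf] mu_ge[OF ctx, of "c' + t"] c0 t(1) by simp
  qed
  then show ?thesis using dpos by blast
qed

lemma closed_step:
  assumes c0: "0 < c0"
    and hyp: "\<forall>t. 0 \<le> t \<and> t < c0 \<longrightarrow> lambda_star E1 E2 t = lambda_max (laplacian E1) \<and> lambda_star_simple E1 E2 t"
  shows "lambda_star E1 E2 c0 = lambda_max (laplacian E1)"
proof -
  let ?l1 = "lambda_max (laplacian E1)"
  have "lambda_star E1 E2 c0 \<le> ?l1 + e" if e: "e > 0" for e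
  proof -
    define t where "t = max (c0/2) (c0 - e/8)"
    have t1: "c0/2 \<le> t" "c0 - e/8 \<le> t" by (simp_all add: t_def)
    have t2: "t < c0" using c0 e by (simp add: t_def)
    have t: "0 < t" "t < c0" "c0 - t \<le> e/8" using t1 t2 c0 by linarith+
    have ht: "lambda_star E1 E2 t = ?l1" "lambda_star_simple E1 E2 t" using hyp t(1,2) by auto
    obtain w' where w'0: "w' \<in> feasible_weights t" "lambda_max (multiplex_laplacian E1 E2 w') = lambda_star E1 E2 t"
      using ht(2) unfolding lambda_star_simple_def by blast
    have w': "w' \<in> feasible_weights t" "lambda_max (multiplex_laplacian E1 E2 w') = ?l1"
      using w'0 ht(1) by simp_all
    have w'nn: "\<forall>i. 0 \<le> w' i" and w's: "(\<Sum>i\<in>UNIV. w' i) = t"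
      using w'(1) by (auto simp: feasible_weights_def)
    define w where "w = (\<lambda>i. (c0/t) * w' i)"
    have wsum: "(\<Sum>i\<in>UNIV. w i) = c0"
    proof -
      have "(\<Sum>i\<in>UNIV. w i) = (c0/t) * (\<Sum>i\<in>UNIV. w' i)" by (simp add: w_def sum_distrib_left)
      then show ?thesis using w's t by simp
    qed
    have wnn: "\<forall>i. 0 \<le> w i" using w'nn t c0 by (simp add: w_def)
    have wf: "w \<in> feasible_weights c0"
      using wsum wnn by (simp add: feasible_weights_def)
    have ge: "w i - w' i \<ge> 0" for i
    proof -
      have "c0/t \<ge> 1" using t by simp
      then show ?thesis using w'nn unfolding w_def by (metis diff_ge_0_iff_ge mult_le_cancel_right1 not_le)
    qed
    have sd: "(\<Sum>i\<in>UNIV. w i - w' i) = c0 - t"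
      using w's wsum by (simp add: sum_subtractf)
    have "lambda_max (multiplex_laplacian E1 E2 w) \<le> ?l1 + 4 * (c0 - t)"
    proof (rule lmax_le[OF ml_symm[OF g1 g2]], rule allI)
      fix z :: "real^('n+'n)"
      have a: "Qf E1 E2 w' z \<le> ?l1 * (z \<bullet> z)"
        using rayleigh(2)[OF ml_symm[OF g1 g2, of w'], of z] w'(2) by (simp add: ml_quad[OF g1 g2])
      have "Qf E1 E2 w z - Qf E1 E2 w' z = (\<Sum>i\<in>UNIV. (w i - w' i) * (z$Inl i - z$Inr i)^2)"
        by (rule Qf_diff)
      also have "\<dots> \<le> (\<Sum>i\<in>UNIV. (w i - w' i) * (4 * (z \<bullet> z)))"
        by (rule sum_mono, rule mult_left_mono[OF comp_diff_sq ge])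
      also have "\<dots> = (c0 - t) * (4 * (z \<bullet> z))" by (simp add: sum_distrib_right[symmetric] sd)
      finally show "z \<bullet> (multiplex_laplacian E1 E2 w *v z) \<le> (?l1 + 4 * (c0 - t)) * (z \<bullet> z)"
        using a by (simp add: ml_quad[OF g1 g2] algebra_simps)
    qed
    moreover have "lambda_star E1 E2 c0 \<le> lambda_max (multiplex_laplacian E1 E2 w)" by (rule mu_le[OF ctx wf])
    ultimately have A: "lambda_star E1 E2 c0 \<le> ?l1 + 4 * (c0 - t)" by (rule order_trans[rotated])
    have "4 * (c0 - t) \<le> 4 * (e / 8)" by (rule mult_left_mono[OF t(3)]) simp
    also have "\<dots> \<le> e" using e by simp
    finally have "?l1 + 4 * (c0 - t) \<le> ?l1 + e" by simp
    then show ?thesis using A by (rule order_trans[rotated])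
  qed
  then have "lambda_star E1 E2 c0 \<le> ?l1" by (rule field_le_epsilon)
  then show ?thesis using mu_ge[OF ctx, of c0] c0 by simp
qed

lemma mu_all:
  assumes hyp: "\<forall>c'. 0 \<le> c' \<and> c' < c1 \<longrightarrow> lambda_star_simple E1 E2 c'"
    and i0: "v $ i0 = 0" and c: "0 \<le> c" "c < c1"
  shows "lambda_star E1 E2 c = lambda_max (laplacian E1)"
proof -
  let ?l1 = "lambda_max (laplacian E1)"
  define B where "B = {s. 0 \<le> s \<and> s \<le> c \<and> (\<forall>u. 0 \<le> u \<and> u \<le> s \<longrightarrow> lambda_star E1 E2 u = ?l1)}"
  have B0: "0 \<in> B" using c mu0[OF ctx] by (auto simp: B_def)
  have bdd: "bdd_above B" by (auto simp: B_def intro!: bdd_aboveI[of _ c])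
  define s where "s = Sup B"
  have s0: "0 \<le> s" using cSup_upper[OF B0 bdd] s_def by simp
  have sc: "s \<le> c" unfolding s_def by (rule cSup_least) (use B0 in \<open>auto simp: B_def\<close>)
  have below: "lambda_star E1 E2 u = ?l1" if "0 \<le> u" "u < s" for u
  proof -
    have "u < Sup B" using that s_def by simp
    then obtain b where "b \<in> B" "u < b" using less_cSup_iff[OF _ bdd] B0 by blast
    then show ?thesis using that by (auto simp: B_def)
  qed
  have at_s: "lambda_star E1 E2 s = ?l1"
  proof (cases "s = 0")
    case True then show ?thesis using mu0[OF ctx] by simp
  next
    case False
    then have "0 < s" using s0 by simp
    moreover have "\<forall>t. 0 \<le> t \<and> t < s \<longrightarrow> lambda_star E1 E2 t = ?l1 \<and> lambda_star_simple E1 E2 t"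
      using below hyp sc c by auto
    ultimately show ?thesis by (rule closed_step)
  qed
  have sB: "\<forall>u. 0 \<le> u \<and> u \<le> s \<longrightarrow> lambda_star E1 E2 u = ?l1"
    using below at_s by (metis order_le_less)
  have "s = c"
  proof (rule ccontr)
    assume "s \<noteq> c"
    then have slt: "s < c" using sc by simp
    obtain d where d: "d > 0" "\<forall>t. 0 \<le> t \<and> t \<le> d \<longrightarrow> lambda_star E1 E2 (s + t) = ?l1"
      using extend[OF s0 _ at_s i0] hyp s0 slt c by force
    define s' where "s' = min (s + d) c"
    have "s' \<in> B" unfolding B_def
    proof (intro CollectI conjI allI impI)
      show "0 \<le> s'" using s0 d slt by (simp add: s'_def)
      show "s' \<le> c" by (simp add: s'_def)
      fix u assume u: "0 \<le> u \<and> u \<le> s'"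
      show "lambda_star E1 E2 u = ?l1"
      proof (cases "u \<le> s")
        case True then show ?thesis using sB u by blast
      next
        case False
        then have "0 \<le> u - s" "u - s \<le> d" using u by (auto simp: s'_def)
        then have "lambda_star E1 E2 (s + (u - s)) = ?l1" using d(2) by blast
        then show ?thesis by simp
      qed
    qed
    then have "s' \<le> s" using cSup_upper[OF _ bdd] s_def by simp
    moreover have "s < s'" using d slt by (simp add: s'_def)
    ultimately show False by simp
  qed
  then show ?thesis using at_s by simp
qed

end


lemma normsq: "norm (p::real^'m)^2 = (\<Sum>k\<in>UNIV. (p$k)^2)"
  unfolding power2_norm_eq_inner inner_vec_def by (simp add: power2_eq_square)

lemma if_sum0: "(if P then sum g A else 0) = sum (\<lambda>k. if P then g k else 0) A"
  by (cases P) simp_all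

lemma if_div0: "(if P then (a::real) / d else 0) = (if P then a else 0) / d"
  by simp

lemma edge_swap:
  fixes f :: "'n::finite \<Rightarrow> real^'m"
  shows "(\<Sum>k\<in>UNIV. \<Sum>i\<in>UNIV. \<Sum>j\<in>UNIV. if E i j then (f i $ k - f j $ k)^2 else 0)
       = (\<Sum>i\<in>UNIV. \<Sum>j\<in>UNIV. if E i j then norm (f i - f j)^2 else 0)"
proof -
  have "(\<Sum>k\<in>UNIV. \<Sum>i\<in>UNIV. \<Sum>j\<in>UNIV. if E i j then (f i $ k - f j $ k)^2 else 0)
      = (\<Sum>i\<in>UNIV. \<Sum>k\<in>UNIV. \<Sum>j\<in>UNIV. if E i j then (f i $ k - f j $ k)^2 else 0)"
    by (rule sum.swap)
  also have "\<dots> = (\<Sum>i\<in>UNIV. \<Sum>j\<in>UNIV. \<Sum>k\<in>UNIV. if E i j then (f i $ k - f j $ k)^2 else 0)"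
    by (rule sum.cong[OF refl], rule sum.swap)
  also have "\<dots> = (\<Sum>i\<in>UNIV. \<Sum>j\<in>UNIV. if E i j then norm (f i - f j)^2 else 0)"
    by (rule sum.cong[OF refl], rule sum.cong[OF refl]) (simp add: normsq if_sum0)
  finally show ?thesis .
qed

definition Xc :: "('a \<Rightarrow> real^'m) \<Rightarrow> 'm \<Rightarrow> real^'a" where
  "Xc y k = (\<chi> a. y a $ k)"

lemma Xc_nth [simp]: "Xc y k $ a = y a $ k" by (simp add: Xc_def)

lemma sumQ:
  fixes y :: "'n::finite + 'n \<Rightarrow> real^('n + 'n)"
  shows "(\<Sum>k\<in>UNIV. Qf E1 E2 w (Xc y k)) =
      (1/2) * (\<Sum>i\<in>UNIV. \<Sum>j\<in>UNIV. if E1 i j then norm (y (Inl i) - y (Inl j))^2 else 0)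
    + (1/2) * (\<Sum>i\<in>UNIV. \<Sum>j\<in>UNIV. if E2 i j then norm (y (Inr i) - y (Inr j))^2 else 0)
    + (\<Sum>i\<in>UNIV. w i * norm (y (Inl i) - y (Inr i))^2)"
proof -
  have e1: "(\<Sum>k\<in>UNIV. \<Sum>i\<in>UNIV. \<Sum>j\<in>UNIV. if E1 i j then (Xc y k $ Inl i - Xc y k $ Inl j)^2 else 0)
     = (\<Sum>i\<in>UNIV. \<Sum>j\<in>UNIV. if E1 i j then norm (y (Inl i) - y (Inl j))^2 else 0)"
    using edge_swap[of E1 "\<lambda>i. y (Inl i)"] by (simp cong: if_cong)
  have e2: "(\<Sum>k\<in>UNIV. \<Sum>i\<in>UNIV. \<Sum>j\<in>UNIV. if E2 i j then (Xc y k $ Inr i - Xc y k $ Inr j)^2 else 0)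
     = (\<Sum>i\<in>UNIV. \<Sum>j\<in>UNIV. if E2 i j then norm (y (Inr i) - y (Inr j))^2 else 0)"
    using edge_swap[of E2 "\<lambda>i. y (Inr i)"] by (simp cong: if_cong)
  have "(\<Sum>i\<in>UNIV. w i * norm (y (Inl i) - y (Inr i))^2)
      = (\<Sum>i\<in>UNIV. \<Sum>k\<in>UNIV. w i * (y (Inl i) $ k - y (Inr i) $ k)^2)"
    by (simp add: normsq sum_distrib_left)
  also have "\<dots> = (\<Sum>k\<in>UNIV. \<Sum>i\<in>UNIV. w i * (y (Inl i) $ k - y (Inr i) $ k)^2)"
    by (rule sum.swap)
  also have "\<dots> = (\<Sum>k\<in>UNIV. \<Sum>i\<in>UNIV. w i * (Xc y k $ Inl i - Xc y k $ Inr i)^2)"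
    by simp
  finally have e3: "(\<Sum>k\<in>UNIV. \<Sum>i\<in>UNIV. w i * (Xc y k $ Inl i - Xc y k $ Inr i)^2)
     = (\<Sum>i\<in>UNIV. w i * norm (y (Inl i) - y (Inr i))^2)" by simp
  show ?thesis
    unfolding Qf_def sum.distrib sum_distrib_left[symmetric] e1 e2 e3 ..
qed

lemma XX: "(\<Sum>k\<in>UNIV. Xc y k \<bullet> Xc y k) = (\<Sum>a\<in>UNIV. norm (y a)^2)"
proof -
  have "(\<Sum>k\<in>UNIV. Xc y k \<bullet> Xc y k) = (\<Sum>k\<in>UNIV. \<Sum>a\<in>UNIV. (y a $ k)^2)"
    by (simp add: inner_vec_def power2_eq_square)
  also have "\<dots> = (\<Sum>a\<in>UNIV. \<Sum>k\<in>UNIV. (y a $ k)^2)" by (rule sum.swap)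
  also have "\<dots> = (\<Sum>a\<in>UNIV. norm (y a)^2)" by (simp add: normsq)
  finally show ?thesis .
qed

lemma obj_le:
  assumes w: "w \<in> feasible_weights c" and y: "emb_feasible y \<eta>"
  shows "emb_objective E1 E2 c y \<eta> \<le> (\<Sum>k\<in>UNIV. Qf E1 E2 w (Xc y k))"
proof -
  have wnn: "\<forall>i. 0 \<le> w i" and ws: "(\<Sum>i\<in>UNIV. w i) = c" using w by (auto simp: feasible_weights_def)
  have yl: "\<forall>i. \<eta> \<le> norm (y (Inl i) - y (Inr i))^2" using y by (simp add: emb_feasible_def)
  have "(\<Sum>i\<in>UNIV. w i * \<eta>) = (\<Sum>i\<in>UNIV. w i) * \<eta>" by (rule sum_distrib_right[symmetric])
  then have "c * \<eta> = (\<Sum>i\<in>UNIV. w i * \<eta>)" using ws by simp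
  also have "\<dots> \<le> (\<Sum>i\<in>UNIV. w i * norm (y (Inl i) - y (Inr i))^2)"
    by (rule sum_mono) (simp add: mult_left_mono wnn yl)
  finally have "c * \<eta> \<le> (\<Sum>i\<in>UNIV. w i * norm (y (Inl i) - y (Inr i))^2)" .
  then show ?thesis unfolding emb_objective_def sumQ by linarith
qed

lemma card_Plus_ge2: "2 \<le> CARD('n::finite + 'n)"
proof -
  obtain i :: 'n where True by simp
  have "card {Inl i, Inr i :: 'n + 'n} = 2" by simp
  moreover have "card {Inl i, Inr i :: 'n + 'n} \<le> CARD('n + 'n)" by (rule card_mono) simp_all
  ultimately show ?thesis by simp
qed

theorem proposition6:
  fixes E1 E2 :: "'n::finite \<Rightarrow> 'n \<Rightarrow> bool"
    and v :: "real^'n" and c1 c :: real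
    and x :: "'n + 'n \<Rightarrow> real^('n + 'n)" and \<xi> :: real
  assumes "simple_graph E1" and "simple_graph E2"
    and "lambda_max (laplacian E1) > lambda_max (laplacian E2)"
    and "simple_eigenvalue (laplacian E1) (lambda_max (laplacian E1))"
    and "v \<noteq> 0" and "laplacian E1 *v v = lambda_max (laplacian E1) *\<^sub>R v"
    and "\<exists>i. v $ i = 0"
    and "c1 > 0"
    and "\<forall>c'. 0 \<le> c' \<and> c' < c1 \<longrightarrow> lambda_star_simple E1 E2 c'"
    and "0 \<le> c" and "c < c1"
    and "emb_optimal E1 E2 c x \<xi>"
  shows "\<exists>Q \<gamma> k. rotation_matrix Q
           \<and> (\<forall>i. Q *v x (Inl i) = (\<gamma> * v $ i) *\<^sub>R axis k 1)
           \<and> (\<forall>i. Q *v x (Inr i) = 0)"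
proof -
  let ?l1 = "lambda_max (laplacian E1)"
  note ctx = assms(1,2,3,5,6)
  obtain i0 where i0: "v $ i0 = 0" using assms(7) by blast
  have mu: "lambda_star E1 E2 c = ?l1" by (rule mu_all[OF ctx assms(9) i0 assms(10,11)])
  have "lambda_star_simple E1 E2 c" using assms(9,10,11) by simp
  then obtain w where w: "w \<in> feasible_weights c" "lambda_max (multiplex_laplacian E1 E2 w) = ?l1"
      "simple_eigenvalue (multiplex_laplacian E1 E2 w) ?l1"
    unfolding lambda_star_simple_def mu by blast
  note ts = top_space[OF ctx w]
  have xf: "emb_feasible x \<xi>"
    and xo: "\<forall>y \<eta>. emb_feasible y \<eta> \<longrightarrow> emb_objective E1 E2 c y \<eta> \<le> emb_objective E1 E2 c x \<xi>"
    using assms(12) by (simp_all add: emb_optimal_def)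
  define y0 :: "'n + 'n \<Rightarrow> real^('n+'n)" where "y0 = (\<lambda>a. case a of Inl i \<Rightarrow> (v$i / norm v) *\<^sub>R axis (Inl i0) (1::real) | Inr i \<Rightarrow> (0::real^('n+'n)))"
  have nv: "norm v > 0" using assms(5) by simp
  have vv: "v \<bullet> v = norm v ^ 2" by (simp add: power2_norm_eq_inner)
  have y0f: "emb_feasible y0 0"
  proof -
    have "(\<Sum>a\<in>UNIV. norm (y0 a)^2) = (\<Sum>i\<in>UNIV. (v$i / norm v)^2)"
      by (simp add: sum_UNIV_Plus y0_def power2_abs power_divide)
    also have "\<dots> = (\<Sum>i\<in>UNIV. (v$i)^2) / (norm v)^2" by (simp add: power_divide sum_divide_distrib)
    also have "\<dots> = 1" using nv by (simp add: normsq[symmetric])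
    finally show ?thesis by (simp add: emb_feasible_def y0_def)
  qed
  have y0r: "y0 (Inr i) = 0" for i by (simp add: y0_def)
  have y0o: "emb_objective E1 E2 c y0 0 = ?l1"
  proof -
    have n: "norm (y0 (Inl i) - y0 (Inl j))^2 = (v$i - v$j)^2 / (norm v)^2" for i j
    proof -
      have "y0 (Inl i) - y0 (Inl j) = (v$i / norm v - v$j / norm v) *\<^sub>R axis (Inl i0) (1::real)"
        by (simp add: y0_def scaleR_diff_left)
      then show ?thesis by (simp add: power2_abs diff_divide_distrib[symmetric] power_divide)
    qed
    have "emb_objective E1 E2 c y0 0 = (1/2) * (\<Sum>i\<in>UNIV. \<Sum>j\<in>UNIV. if E1 i j then (v$i - v$j)^2 / (norm v)^2 else 0)"
      by (simp add: emb_objective_def n y0r cong: if_cong)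
    also have "\<dots> = (v \<bullet> (laplacian E1 *v v)) / (norm v)^2"
      by (simp add: lap_quad[OF assms(1)] if_div0 sum_divide_distrib[symmetric])
    also have "\<dots> = ?l1" using assms(6) vv nv by simp
    finally show ?thesis .
  qed
  have "emb_objective E1 E2 c y0 0 \<le> emb_objective E1 E2 c x \<xi>" using xo y0f by blast
  then have lo: "?l1 \<le> emb_objective E1 E2 c x \<xi>" using y0o by simp
  have up1: "emb_objective E1 E2 c x \<xi> \<le> (\<Sum>k\<in>UNIV. Qf E1 E2 w (Xc x k))" by (rule obj_le[OF w(1) xf])
  have le_all: "\<forall>z. z \<bullet> (multiplex_laplacian E1 E2 w *v z) \<le> ?l1 * (z \<bullet> z)"
    using rayleigh(2)[OF ml_symm[OF assms(1,2), of w]] w(2) by simp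
  have each: "Qf E1 E2 w (Xc x k) \<le> ?l1 * (Xc x k \<bullet> Xc x k)" for k
  proof -
    have "Xc x k \<bullet> (multiplex_laplacian E1 E2 w *v Xc x k) \<le> ?l1 * (Xc x k \<bullet> Xc x k)" using le_all by blast
    then show ?thesis by (simp add: ml_quad[OF assms(1,2)])
  qed
  have tot: "(\<Sum>k\<in>UNIV. ?l1 * (Xc x k \<bullet> Xc x k)) = ?l1"
    using xf by (simp add: sum_distrib_left[symmetric] XX emb_feasible_def)
  have nn: "\<forall>k\<in>UNIV. 0 \<le> ?l1 * (Xc x k \<bullet> Xc x k) - Qf E1 E2 w (Xc x k)" using each by simp
  have "(\<Sum>k\<in>UNIV. ?l1 * (Xc x k \<bullet> Xc x k) - Qf E1 E2 w (Xc x k)) \<le> 0"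
    using lo up1 tot by (simp add: sum_subtractf)
  moreover have "0 \<le> (\<Sum>k\<in>UNIV. ?l1 * (Xc x k \<bullet> Xc x k) - Qf E1 E2 w (Xc x k))"
    using nn by (simp add: sum_nonneg)
  ultimately have "(\<Sum>k\<in>UNIV. ?l1 * (Xc x k \<bullet> Xc x k) - Qf E1 E2 w (Xc x k)) = 0" by linarith
  then have "\<forall>k\<in>UNIV. ?l1 * (Xc x k \<bullet> Xc x k) - Qf E1 E2 w (Xc x k) = 0"
    using nn by (simp add: sum_nonneg_eq_0_iff)
  then have eqk: "Xc x k \<bullet> (multiplex_laplacian E1 E2 w *v Xc x k) = ?l1 * (Xc x k \<bullet> Xc x k)" for k
    by (simp add: ml_quad[OF assms(1,2)])
  have "\<exists>b. Xc x k = b *\<^sub>R Vv v" for k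
  proof -
    have "multiplex_laplacian E1 E2 w *v Xc x k = ?l1 *\<^sub>R Xc x k"
      by (rule psd_eq[OF ml_symm[OF assms(1,2)] le_all eqk])
    then have "Xc x k \<in> span {Vv v}" using ts(3) unfolding eigenspace_def by blast
    then show ?thesis by (auto simp: span_singleton)
  qed
  define \<beta> where "\<beta> k = (SOME b. Xc x k = b *\<^sub>R Vv v)" for k
  have \<beta>: "Xc x k = \<beta> k *\<^sub>R Vv v" for k
    unfolding \<beta>_def by (rule someI_ex) (rule \<open>\<And>k. \<exists>b. Xc x k = b *\<^sub>R Vv v\<close>)
  define \<alpha> where "\<alpha> = (\<chi> k. \<beta> k)"
  have xl: "x (Inl i) = v$i *\<^sub>R \<alpha>" for i
  proof -
    have "x (Inl i) $ k = (v$i *\<^sub>R \<alpha>) $ k" for k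
      using arg_cong[OF \<beta>[of k], of "\<lambda>z. z $ Inl i"] by (simp add: \<alpha>_def)
    then show ?thesis by (simp add: vec_eq_iff)
  qed
  have xr: "x (Inr i) = 0" for i
  proof -
    have "x (Inr i) $ k = 0" for k
      using arg_cong[OF \<beta>[of k], of "\<lambda>z. z $ Inr i"] by simp
    then show ?thesis by (simp add: vec_eq_iff)
  qed
  obtain Q \<gamma> k where Q: "rotation_matrix Q" "Q *v \<alpha> = \<gamma> *\<^sub>R axis k 1"
    using rot[OF card_Plus_ge2, of \<alpha>] by blast
  have "Q *v x (Inl i) = (\<gamma> * v $ i) *\<^sub>R axis k 1" for i
    using Q(2) by (simp add: xl matrix_vector_mult_scaleR)
  moreover have "Q *v x (Inr i) = 0" for i by (simp add: xr)
  ultimately show ?thesis using Q(1) by blast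
qed


end
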